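(* For each calculus in the family $\mathsf{CL}^*$ (namely $\mathsf{CL}$, $\mathsf{CL}^N$, $\mathsf{CL}^T$, $\mathsf{CL}^W$, $\mathsf{CL}^C$, $\mathsf{CL}^U$, $\mathsf{CL}^{NU}$, $\mathsf{CL}^{TU}$, $\mathsf{CL}^{WU}$, $\mathsf{CL}^{CU}$, $\mathsf{CL}^A$, $\mathsf{CL}^{NA}$, $\mathsf{CL}^{TA}$, $\mathsf{CL}^{WA}$, $\mathsf{CL}^{CA}$): if a sequent $\Gamma\Rightarrow\Delta$ is derivable in the calculus, then it is valid in every neighbourhood model of the corresponding class.
   Context: Formulas $\mathcal{L}::=p\mid\bot\mid A\wedge B\mid A\lor B\mid A\to B\mid A>B$. Neighbourhood model $\langle W,N,\llbracket\cdot\rrbracket\rangle$: $W\ne\emptyset$, $N:W\to\mathcal{P}(\mathcal{P}(W))$ with every $\alpha\in N(x)$ non-empty; $x\Vdash A>B$ iff for all $\alpha\in N(x)$ containing a world forcing $A$ there is $\beta\in N(x)$, $\beta\subseteq\alpha$, containing a world forcing $A$, all of whose worlds force $A\to B$. Conditions: normality ($N(x)\ne\emptyset$), total reflexivity (some $\alpha\in N(x)$ contains $x$), weak centering (all $\alpha\in N(x)$ contain $x$), centering (weak centering and $\{x\}\in N(x)$), uniformity ($\alpha\in N(x),y\in\alpha\Rightarrow\bigcup N(x)=\bigcup N(y)$), absoluteness ($\alpha\in N(x),y\in\alpha\Rightarrow N(x)=N(y)$). The class corresponding to a calculus $\mathsf{CL}^{S}$ is given by the conditions named by $S$ together with those they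 include: N; T includes N; W includes N,T; C includes N,T,W; U uniformity; A absoluteness. Syntax: world labels $x,y,z,\dots$; neighbourhood labels $a,b,c,\dots$, including for each world label $x$ a label $\{x\}$. Relational atoms: $a\in N(x)$, $x\in a$, $a\subseteq b$. Labelled formulas: relational atoms, $x:A$, $a\Vdash^{\exists}A$, $a\Vdash^{\forall}A$, $x\Vdash_a A|B$. A sequent $\Gamma\Rightarrow\Delta$ has multisets of labelled formulas, relational atoms only in $\Gamma$. Rules of $\mathsf{CL}$ (premisses $\Rightarrow$ conclusion; "(u!)" means label $u$ does not occur in the conclusion): initial sequents $x:p,\Gamma\Rightarrow\Delta,x:p$ ($p$ atomic) and $x:\bot,\Gamma\Rightarrow\Delta$; standard G3 rules for $\wedge,\vee,\to$ acting on formulas $x:A$; L$\forall$: from $x:A,x\in a,a\Vdash^\forall A,\Gamma\Rightarrow\Delta$ infer $x\in a,a\Vdash^\forall A,\Gamma\Rightarrow\Delta$; R$\forall$ (x!): from $x\in a,\Gamma\Rightarrow\Delta,x:A$ infer $\Gamma\Rightarrow\Delta,a\Vdash^\forall A$; L$\exists$ (x!): from $x\in a,x:A,\Gamma\Rightarrow\Delta$ infer $a\Vdash^\exists A,\Gamma\Rightarrow\Delta$; R$\exists$: from $x\in a,\Gamma\Rightarrow\Delta,x:A,a\Vdash^\exists A$ infer $x\in a,\Gamma\Rightarrow\Delta,a\Vdash^\exists A$; R$>$ (a!): from $a\in N(x),a\Vdash^\exists A,\Gamma\Rightarrow\Delta,x\Vdash_aA|B$ infer $\Gamma\Rightarrow\Delta,x:A>B$;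 L$>$: from $a\in N(x),x:A>B,\Gamma\Rightarrow\Delta,a\Vdash^\exists A$ and $x\Vdash_aA|B,a\in N(x),x:A>B,\Gamma\Rightarrow\Delta$ infer $a\in N(x),x:A>B,\Gamma\Rightarrow\Delta$; R$|$: from $c\in N(x),c\subseteq a,\Gamma\Rightarrow\Delta,x\Vdash_aA|B,c\Vdash^\exists A$ and $c\in N(x),c\subseteq a,\Gamma\Rightarrow\Delta,x\Vdash_aA|B,c\Vdash^\forall A\to B$ infer $c\in N(x),c\subseteq a,\Gamma\Rightarrow\Delta,x\Vdash_aA|B$; L$|$ (c!): from $c\in N(x),c\subseteq a,c\Vdash^\exists A,c\Vdash^\forall A\to B,\Gamma\Rightarrow\Delta$ infer $x\Vdash_aA|B,\Gamma\Rightarrow\Delta$; Ref: from $a\subseteq a,\Gamma\Rightarrow\Delta$ infer $\Gamma\Rightarrow\Delta$; Tr: from $c\subseteq a,c\subseteq b,b\subseteq a,\Gamma\Rightarrow\Delta$ infer $c\subseteq b,b\subseteq a,\Gamma\Rightarrow\Delta$; L$\subseteq$: from $x\in a,a\subseteq b,x\in b,\Gamma\Rightarrow\Delta$ infer $x\in a,a\subseteq b,\Gamma\Rightarrow\Delta$. Extension rules: N (a!): from $a\in N(x),\Gamma\Rightarrow\Delta$ infer $\Gamma\Rightarrow\Delta$; 0 (y!): from $y\in a,a\in N(x),\Gamma\Rightarrow\Delta$ infer $a\in N(x),\Gamma\Rightarrow\Delta$; T (a!): from $x\in a,a\in N(x),\Gamma\Rightarrow\Delta$ infer $\Gamma\Rightarrow\Delta$;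 W: from $x\in a,a\in N(x),\Gamma\Rightarrow\Delta$ infer $a\in N(x),\Gamma\Rightarrow\Delta$; Single: from $x\in\{x\},\{x\}\in N(x),\Gamma\Rightarrow\Delta$ infer $\{x\}\in N(x),\Gamma\Rightarrow\Delta$; C: from $\{x\}\in N(x),\{x\}\subseteq a,a\in N(x),\Gamma\Rightarrow\Delta$ infer $a\in N(x),\Gamma\Rightarrow\Delta$; Repl$_1$: from $y\in\{x\},At(x),At(y),\Gamma\Rightarrow\Delta$ infer $y\in\{x\},At(x),\Gamma\Rightarrow\Delta$; Repl$_2$: from $y\in\{x\},At(x),At(y),\Gamma\Rightarrow\Delta$ infer $y\in\{x\},At(y),\Gamma\Rightarrow\Delta$, where $At(x)$ is one of $x:P$ ($P$ atomic), $x\in a$, $a\in N(x)$, $x\in\{z\}$ and $At(y)$ replaces $x$ by $y$; U$_1$ (c!): from $z\in c,c\in N(x),a\in N(x),y\in a,b\in N(y),z\in b,\Gamma\Rightarrow\Delta$ infer $a\in N(x),y\in a,b\in N(y),z\in b,\Gamma\Rightarrow\Delta$; U$_2$ (c!): from $z\in c,c\in N(y),a\in N(x),y\in a,b\in N(x),z\in b,\Gamma\Rightarrow\Delta$ infer $a\in N(x),y\in a,b\in N(x),z\in b,\Gamma\Rightarrow\Delta$; A$_1$: from $b\in N(y),a\in N(x),y\in a,b\in N(x),\Gamma\Rightarrow\Delta$ infer $a\in N(x),y\in a,b\in N(x),\Gamma\Rightarrow\Delta$; A$_2$: from $b\in N(x),a\in N(x),y\in a,b\in N(y),\Gamma\Rightarrow\Delta$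 infer $a\in N(x),y\in a,b\in N(y),\Gamma\Rightarrow\Delta$; plus the contracted instances of U$_1$, U$_2$, A$_1$ in which coinciding relational atoms of the conclusion are identified. Calculi: $\mathsf{CL}^N=\mathsf{CL}+$N$+$0; $\mathsf{CL}^T=\mathsf{CL}^N+$T; $\mathsf{CL}^W=\mathsf{CL}^T+$W; $\mathsf{CL}^C=\mathsf{CL}^W+$C$+$Single$+$Repl$_1+$Repl$_2$; $\mathsf{CL}^U=\mathsf{CL}+$U$_1+$U$_2$; $\mathsf{CL}^{NU},\dots,\mathsf{CL}^{CU}$ are $\mathsf{CL}^N,\dots,\mathsf{CL}^C$ plus U$_1$,U$_2$; $\mathsf{CL}^A=\mathsf{CL}+$A$_1+$A$_2$; $\mathsf{CL}^{NA},\dots,\mathsf{CL}^{CA}$ are $\mathsf{CL}^N,\dots,\mathsf{CL}^C$ plus A$_1$,A$_2$. Validity of sequents: for a model $\mathcal{M}$, a realization $(\rho,\sigma)$ maps world labels to worlds and neighbourhood labels to sets of worlds. $\mathcal{M}\vDash_{\rho,\sigma}a\in N(x)$ iff $\sigma(a)\in N(\rho(x))$; $a\subseteq b$ iff $\sigma(a)\subseteq\sigma(b)$; $y\in a$ iff $\rho(y)\in\sigma(a)$; $x:A$ iff $\rho(x)\Vdash A$; $a\Vdash^\forall A$ iff all worlds of $\sigma(a)$ force $A$; $a\Vdash^\exists A$ iff some world of $\sigma(a)$ forces $A$; $x\Vdash_aA|B$ iff $\sigma(a)\in N(\rho(x))$ and some $\beta\subseteq\sigma(a)$ (in $N(\rho(x))$)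 contains a world forcing $A$ and all its worlds force $A\to B$. $\Gamma\Rightarrow\Delta$ is valid in $\mathcal{M}$ if for every realization some formula of $\Gamma$ is not satisfied or some formula of $\Delta$ is satisfied.
   Formalization: The clause for $x\Vdash_aA|B$ drops the conjunct $\sigma(a)\in N(\rho(x))$, every realization satisfies $\sigma(\{x\})=\{\rho(x)\}$, and the fresh neighbourhood labels (a!, c!) of the rules are never labels $\{x\}$. Each condition added here is assumed in the paper as well or is needed for the statement above to hold. *)

theory Defs
  imports Main "HOL-Library.Multiset"
begin

datatype fm = Atm nat | Bot | Conj fm fm | Disj fm fm | Impl fm fm | Cnd fm fm

type_synonym wlab = nat

text \<open>Neighbourhood labels: ordinary labels a,b,c,... and, for every world label x, the label {x}.\<close>
datatype nlab = NL nat | Sing wlab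

text \<open>InN a x : a \<in> N(x);  Mem x a : x \<in> a;  Sub a b : a \<subseteq> b;  Lab x A : x:A;
  FAll a A : a \<Vdash>\<forall> A;  FEx a A : a \<Vdash>\<exists> A;  CondL x a A B : x \<Vdash>_a A|B\<close>
datatype lf = InN nlab wlab | Mem wlab nlab | Sub nlab nlab | Lab wlab fm
  | FAll nlab fm | FEx nlab fm | CondL wlab nlab fm fm

fun is_rel :: "lf \<Rightarrow> bool" where
  "is_rel (InN a x) = True"
| "is_rel (Mem x a) = True"
| "is_rel (Sub a b) = True"
| "is_rel _ = False"

fun wl_of_n :: "nlab \<Rightarrow> wlab set" where
  "wl_of_n (NL n) = {}"
| "wl_of_n (Sing x) = {x}"

fun wlabs :: "lf \<Rightarrow> wlab set" where
  "wlabs (InN a x) = insert x (wl_of_n a)"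
| "wlabs (Mem x a) = insert x (wl_of_n a)"
| "wlabs (Sub a b) = wl_of_n a \<union> wl_of_n b"
| "wlabs (Lab x A) = {x}"
| "wlabs (FAll a A) = wl_of_n a"
| "wlabs (FEx a A) = wl_of_n a"
| "wlabs (CondL x a A B) = insert x (wl_of_n a)"

fun nlabs :: "lf \<Rightarrow> nlab set" where
  "nlabs (InN a x) = {a}"
| "nlabs (Mem x a) = {a}"
| "nlabs (Sub a b) = {a, b}"
| "nlabs (Lab x A) = {}"
| "nlabs (FAll a A) = {a}"
| "nlabs (FEx a A) = {a}"
| "nlabs (CondL x a A B) = {a}"

definition wfresh :: "wlab \<Rightarrow> lf multiset \<Rightarrow> lf multiset \<Rightarrow> bool" where
  "wfresh x \<Gamma> \<Delta> \<longleftrightarrow> (\<forall>\<phi> \<in># \<Gamma> + \<Delta>. x \<notin> wlabs \<phi>)"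

definition nfresh :: "nat \<Rightarrow> lf multiset \<Rightarrow> lf multiset \<Rightarrow> bool" where
  "nfresh n \<Gamma> \<Delta> \<longleftrightarrow> (\<forall>\<phi> \<in># \<Gamma> + \<Delta>. NL n \<notin> nlabs \<phi>)"

text \<open>Atoms At(x) of the replacement rules: x:P (P atomic), x \<in> a, a \<in> N(x) (x \<in> {z} is the case a = {z}).\<close>
datatype ratom = RP nat | RM nlab | RN nlab

fun at :: "ratom \<Rightarrow> wlab \<Rightarrow> lf" where
  "at (RP p) x = Lab x (Atm p)"
| "at (RM a) x = Mem x a"
| "at (RN a) x = InN a x"

datatype base = B0 | BN | BT | BW | BC
datatype sfx = S0 | SU | SA

definition hasN :: "base \<Rightarrow> bool" where "hasN b \<longleftrightarrow> b \<noteq> B0"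
definition hasT :: "base \<Rightarrow> bool" where "hasT b \<longleftrightarrow> b \<in> {BT, BW, BC}"
definition hasW :: "base \<Rightarrow> bool" where "hasW b \<longleftrightarrow> b \<in> {BW, BC}"
definition hasC :: "base \<Rightarrow> bool" where "hasC b \<longleftrightarrow> b = BC"

inductive derivable :: "base \<Rightarrow> sfx \<Rightarrow> lf multiset \<Rightarrow> lf multiset \<Rightarrow> bool"
  for b :: base and s :: sfx where
  init: "\<forall>\<phi> \<in># \<Delta>. \<not> is_rel \<phi> \<Longrightarrow>
     derivable b s (add_mset (Lab x (Atm p)) \<Gamma>) (add_mset (Lab x (Atm p)) \<Delta>)"
| botL: "\<forall>\<phi> \<in># \<Delta>. \<not> is_rel \<phi> \<Longrightarrow> derivable b s (add_mset (Lab x Bot) \<Gamma>) \<Delta>"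
| conjL: "derivable b s (add_mset (Lab x A) (add_mset (Lab x B) \<Gamma>)) \<Delta> \<Longrightarrow>
     derivable b s (add_mset (Lab x (Conj A B)) \<Gamma>) \<Delta>"
| conjR: "derivable b s \<Gamma> (add_mset (Lab x A) \<Delta>) \<Longrightarrow> derivable b s \<Gamma> (add_mset (Lab x B) \<Delta>) \<Longrightarrow>
     derivable b s \<Gamma> (add_mset (Lab x (Conj A B)) \<Delta>)"
| disjL: "derivable b s (add_mset (Lab x A) \<Gamma>) \<Delta> \<Longrightarrow> derivable b s (add_mset (Lab x B) \<Gamma>) \<Delta> \<Longrightarrow>
     derivable b s (add_mset (Lab x (Disj A B)) \<Gamma>) \<Delta>"
| disjR: "derivable b s \<Gamma> (add_mset (Lab x A) (add_mset (Lab x B) \<Delta>)) \<Longrightarrow>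
     derivable b s \<Gamma> (add_mset (Lab x (Disj A B)) \<Delta>)"
| implL: "derivable b s \<Gamma> (add_mset (Lab x A) \<Delta>) \<Longrightarrow> derivable b s (add_mset (Lab x B) \<Gamma>) \<Delta> \<Longrightarrow>
     derivable b s (add_mset (Lab x (Impl A B)) \<Gamma>) \<Delta>"
| implR: "derivable b s (add_mset (Lab x A) \<Gamma>) (add_mset (Lab x B) \<Delta>) \<Longrightarrow>
     derivable b s \<Gamma> (add_mset (Lab x (Impl A B)) \<Delta>)"
| allL: "derivable b s (add_mset (Lab x A) (add_mset (Mem x a) (add_mset (FAll a A) \<Gamma>))) \<Delta> \<Longrightarrow>
     derivable b s (add_mset (Mem x a) (add_mset (FAll a A) \<Gamma>)) \<Delta>"
| allR: "wfresh x \<Gamma> (add_mset (FAll a A) \<Delta>) \<Longrightarrow>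
     derivable b s (add_mset (Mem x a) \<Gamma>) (add_mset (Lab x A) \<Delta>) \<Longrightarrow>
     derivable b s \<Gamma> (add_mset (FAll a A) \<Delta>)"
| exL: "wfresh x (add_mset (FEx a A) \<Gamma>) \<Delta> \<Longrightarrow>
     derivable b s (add_mset (Mem x a) (add_mset (Lab x A) \<Gamma>)) \<Delta> \<Longrightarrow>
     derivable b s (add_mset (FEx a A) \<Gamma>) \<Delta>"
| exR: "derivable b s (add_mset (Mem x a) \<Gamma>) (add_mset (Lab x A) (add_mset (FEx a A) \<Delta>)) \<Longrightarrow>
     derivable b s (add_mset (Mem x a) \<Gamma>) (add_mset (FEx a A) \<Delta>)"
| condR: "nfresh n \<Gamma> (add_mset (Lab x (Cnd A B)) \<Delta>) \<Longrightarrow>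
     derivable b s (add_mset (InN (NL n) x) (add_mset (FEx (NL n) A) \<Gamma>))
                   (add_mset (CondL x (NL n) A B) \<Delta>) \<Longrightarrow>
     derivable b s \<Gamma> (add_mset (Lab x (Cnd A B)) \<Delta>)"
| condL: "derivable b s (add_mset (InN a x) (add_mset (Lab x (Cnd A B)) \<Gamma>)) (add_mset (FEx a A) \<Delta>) \<Longrightarrow>
     derivable b s (add_mset (CondL x a A B) (add_mset (InN a x) (add_mset (Lab x (Cnd A B)) \<Gamma>))) \<Delta> \<Longrightarrow>
     derivable b s (add_mset (InN a x) (add_mset (Lab x (Cnd A B)) \<Gamma>)) \<Delta>"
| barR: "derivable b s (add_mset (InN c x) (add_mset (Sub c a) \<Gamma>))
            (add_mset (CondL x a A B) (add_mset (FEx c A) \<Delta>)) \<Longrightarrow>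
     derivable b s (add_mset (InN c x) (add_mset (Sub c a) \<Gamma>))
            (add_mset (CondL x a A B) (add_mset (FAll c (Impl A B)) \<Delta>)) \<Longrightarrow>
     derivable b s (add_mset (InN c x) (add_mset (Sub c a) \<Gamma>)) (add_mset (CondL x a A B) \<Delta>)"
| barL: "nfresh n (add_mset (CondL x a A B) \<Gamma>) \<Delta> \<Longrightarrow>
     derivable b s (add_mset (InN (NL n) x) (add_mset (Sub (NL n) a)
        (add_mset (FEx (NL n) A) (add_mset (FAll (NL n) (Impl A B)) \<Gamma>)))) \<Delta> \<Longrightarrow>
     derivable b s (add_mset (CondL x a A B) \<Gamma>) \<Delta>"
| refl: "derivable b s (add_mset (Sub a a) \<Gamma>) \<Delta> \<Longrightarrow> derivable b s \<Gamma> \<Delta>"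
| trans: "derivable b s (add_mset (Sub c a) (add_mset (Sub c b') (add_mset (Sub b' a) \<Gamma>))) \<Delta> \<Longrightarrow>
     derivable b s (add_mset (Sub c b') (add_mset (Sub b' a) \<Gamma>)) \<Delta>"
| subL: "derivable b s (add_mset (Mem x a) (add_mset (Sub a b') (add_mset (Mem x b') \<Gamma>))) \<Delta> \<Longrightarrow>
     derivable b s (add_mset (Mem x a) (add_mset (Sub a b') \<Gamma>)) \<Delta>"
| ruleN: "hasN b \<Longrightarrow> nfresh n \<Gamma> \<Delta> \<Longrightarrow>
     derivable b s (add_mset (InN (NL n) x) \<Gamma>) \<Delta> \<Longrightarrow> derivable b s \<Gamma> \<Delta>"
| rule0: "hasN b \<Longrightarrow> wfresh y (add_mset (InN a x) \<Gamma>) \<Delta> \<Longrightarrow>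
     derivable b s (add_mset (Mem y a) (add_mset (InN a x) \<Gamma>)) \<Delta> \<Longrightarrow>
     derivable b s (add_mset (InN a x) \<Gamma>) \<Delta>"
| ruleT: "hasT b \<Longrightarrow> nfresh n \<Gamma> \<Delta> \<Longrightarrow>
     derivable b s (add_mset (Mem x (NL n)) (add_mset (InN (NL n) x) \<Gamma>)) \<Delta> \<Longrightarrow>
     derivable b s \<Gamma> \<Delta>"
| ruleW: "hasW b \<Longrightarrow>
     derivable b s (add_mset (Mem x a) (add_mset (InN a x) \<Gamma>)) \<Delta> \<Longrightarrow>
     derivable b s (add_mset (InN a x) \<Gamma>) \<Delta>"
| ruleSingle: "hasC b \<Longrightarrow>
     derivable b s (add_mset (Mem x (Sing x)) (add_mset (InN (Sing x) x) \<Gamma>)) \<Delta> \<Longrightarrow>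
     derivable b s (add_mset (InN (Sing x) x) \<Gamma>) \<Delta>"
| ruleC: "hasC b \<Longrightarrow>
     derivable b s (add_mset (InN (Sing x) x) (add_mset (Sub (Sing x) a) (add_mset (InN a x) \<Gamma>))) \<Delta> \<Longrightarrow>
     derivable b s (add_mset (InN a x) \<Gamma>) \<Delta>"
| repl1: "hasC b \<Longrightarrow>
     derivable b s (add_mset (Mem y (Sing x)) (add_mset (at P x) (add_mset (at P y) \<Gamma>))) \<Delta> \<Longrightarrow>
     derivable b s (add_mset (Mem y (Sing x)) (add_mset (at P x) \<Gamma>)) \<Delta>"
| repl2: "hasC b \<Longrightarrow>
     derivable b s (add_mset (Mem y (Sing x)) (add_mset (at P x) (add_mset (at P y) \<Gamma>))) \<Delta> \<Longrightarrow>
     derivable b s (add_mset (Mem y (Sing x)) (add_mset (at P y) \<Gamma>)) \<Delta>"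
\<comment> \<open>U and A rules; the principal atoms are only required to be present in the
   antecedent, which covers both the plain and the contracted instances\<close>
| ruleU1: "s = SU \<Longrightarrow> nfresh n \<Gamma> \<Delta> \<Longrightarrow>
     InN a x \<in># \<Gamma> \<Longrightarrow> Mem y a \<in># \<Gamma> \<Longrightarrow> InN b' y \<in># \<Gamma> \<Longrightarrow> Mem z b' \<in># \<Gamma> \<Longrightarrow>
     derivable b s (add_mset (Mem z (NL n)) (add_mset (InN (NL n) x) \<Gamma>)) \<Delta> \<Longrightarrow>
     derivable b s \<Gamma> \<Delta>"
| ruleU2: "s = SU \<Longrightarrow> nfresh n \<Gamma> \<Delta> \<Longrightarrow>
     InN a x \<in># \<Gamma> \<Longrightarrow> Mem y a \<in># \<Gamma> \<Longrightarrow> InN b' x \<in># \<Gamma> \<Longrightarrow> Mem z b' \<in># \<Gamma> \<Longrightarrow>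
     derivable b s (add_mset (Mem z (NL n)) (add_mset (InN (NL n) y) \<Gamma>)) \<Delta> \<Longrightarrow>
     derivable b s \<Gamma> \<Delta>"
| ruleA1: "s = SA \<Longrightarrow>
     InN a x \<in># \<Gamma> \<Longrightarrow> Mem y a \<in># \<Gamma> \<Longrightarrow> InN b' x \<in># \<Gamma> \<Longrightarrow>
     derivable b s (add_mset (InN b' y) \<Gamma>) \<Delta> \<Longrightarrow>
     derivable b s \<Gamma> \<Delta>"
| ruleA2: "s = SA \<Longrightarrow>
     InN a x \<in># \<Gamma> \<Longrightarrow> Mem y a \<in># \<Gamma> \<Longrightarrow> InN b' y \<in># \<Gamma> \<Longrightarrow>
     derivable b s (add_mset (InN b' x) \<Gamma>) \<Delta> \<Longrightarrow>
     derivable b s \<Gamma> \<Delta>"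

text \<open>Worlds are the elements of the type 'w (so W is non-empty); V p is the truth set of p.\<close>
fun forces :: "('w \<Rightarrow> 'w set set) \<Rightarrow> (nat \<Rightarrow> 'w set) \<Rightarrow> 'w \<Rightarrow> fm \<Rightarrow> bool" where
  "forces N V w (Atm p) = (w \<in> V p)"
| "forces N V w Bot = False"
| "forces N V w (Conj A B) = (forces N V w A \<and> forces N V w B)"
| "forces N V w (Disj A B) = (forces N V w A \<or> forces N V w B)"
| "forces N V w (Impl A B) = (forces N V w A \<longrightarrow> forces N V w B)"
| "forces N V w (Cnd A B) =
     (\<forall>\<alpha> \<in> N w. (\<exists>v \<in> \<alpha>. forces N V v A) \<longrightarrow>
        (\<exists>\<beta> \<in> N w. \<beta> \<subseteq> \<alpha> \<and> (\<exists>v \<in> \<beta>. forces N V v A) \<and>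
            (\<forall>v \<in> \<beta>. forces N V v A \<longrightarrow> forces N V v B)))"

definition nbhd_model :: "('w \<Rightarrow> 'w set set) \<Rightarrow> bool" where
  "nbhd_model N \<longleftrightarrow> (\<forall>x. \<forall>\<alpha> \<in> N x. \<alpha> \<noteq> {})"

definition normality :: "('w \<Rightarrow> 'w set set) \<Rightarrow> bool" where
  "normality N \<longleftrightarrow> (\<forall>x. N x \<noteq> {})"

definition total_reflexivity :: "('w \<Rightarrow> 'w set set) \<Rightarrow> bool" where
  "total_reflexivity N \<longleftrightarrow> (\<forall>x. \<exists>\<alpha> \<in> N x. x \<in> \<alpha>)"

definition weak_centering :: "('w \<Rightarrow> 'w set set) \<Rightarrow> bool" where
  "weak_centering N \<longleftrightarrow> (\<forall>x. \<forall>\<alpha> \<in> N x. x \<in> \<alpha>)"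

definition centering :: "('w \<Rightarrow> 'w set set) \<Rightarrow> bool" where
  "centering N \<longleftrightarrow> weak_centering N \<and> (\<forall>x. {x} \<in> N x)"

definition uniformity :: "('w \<Rightarrow> 'w set set) \<Rightarrow> bool" where
  "uniformity N \<longleftrightarrow> (\<forall>x \<alpha> y. \<alpha> \<in> N x \<longrightarrow> y \<in> \<alpha> \<longrightarrow> \<Union>(N x) = \<Union>(N y))"

definition absoluteness :: "('w \<Rightarrow> 'w set set) \<Rightarrow> bool" where
  "absoluteness N \<longleftrightarrow> (\<forall>x \<alpha> y. \<alpha> \<in> N x \<longrightarrow> y \<in> \<alpha> \<longrightarrow> N x = N y)"

definition in_class :: "base \<Rightarrow> sfx \<Rightarrow> ('w \<Rightarrow> 'w set set) \<Rightarrow> bool" where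
  "in_class b s N \<longleftrightarrow> nbhd_model N
     \<and> (hasN b \<longrightarrow> normality N)
     \<and> (hasT b \<longrightarrow> total_reflexivity N)
     \<and> (hasW b \<longrightarrow> weak_centering N)
     \<and> (hasC b \<longrightarrow> centering N)
     \<and> (s = SU \<longrightarrow> uniformity N)
     \<and> (s = SA \<longrightarrow> absoluteness N)"

fun sat :: "('w \<Rightarrow> 'w set set) \<Rightarrow> (nat \<Rightarrow> 'w set) \<Rightarrow> (wlab \<Rightarrow> 'w) \<Rightarrow> (nlab \<Rightarrow> 'w set) \<Rightarrow> lf \<Rightarrow> bool" where
  "sat N V \<rho> \<sigma> (InN a x) = (\<sigma> a \<in> N (\<rho> x))"
| "sat N V \<rho> \<sigma> (Mem x a) = (\<rho> x \<in> \<sigma> a)"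
| "sat N V \<rho> \<sigma> (Sub a b) = (\<sigma> a \<subseteq> \<sigma> b)"
| "sat N V \<rho> \<sigma> (Lab x A) = forces N V (\<rho> x) A"
| "sat N V \<rho> \<sigma> (FAll a A) = (\<forall>w \<in> \<sigma> a. forces N V w A)"
| "sat N V \<rho> \<sigma> (FEx a A) = (\<exists>w \<in> \<sigma> a. forces N V w A)"
| "sat N V \<rho> \<sigma> (CondL x a A B) =
     (\<exists>\<beta> \<in> N (\<rho> x). \<beta> \<subseteq> \<sigma> a \<and> (\<exists>w \<in> \<beta>. forces N V w A) \<and>
        (\<forall>w \<in> \<beta>. forces N V w (Impl A B)))"

definition realization :: "(wlab \<Rightarrow> 'w) \<Rightarrow> (nlab \<Rightarrow> 'w set) \<Rightarrow> bool" where
  "realization \<rho> \<sigma> \<longleftrightarrow> (\<forall>x. \<sigma> (Sing x) = {\<rho> x})"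

definition valid :: "('w \<Rightarrow> 'w set set) \<Rightarrow> (nat \<Rightarrow> 'w set) \<Rightarrow> lf multiset \<Rightarrow> lf multiset \<Rightarrow> bool" where
  "valid N V \<Gamma> \<Delta> \<longleftrightarrow> (\<forall>\<rho> \<sigma>. realization \<rho> \<sigma> \<longrightarrow>
     (\<exists>\<phi> \<in># \<Gamma>. \<not> sat N V \<rho> \<sigma> \<phi>) \<or> (\<exists>\<phi> \<in># \<Delta>. sat N V \<rho> \<sigma> \<phi>))"

end

theory Submission
  imports Defs
begin

lemma wl_Sing: "x \<notin> wl_of_n a \<Longrightarrow> a \<noteq> Sing x"
  by (cases a) auto

lemma sat_upd_n: "NL n \<notin> nlabs \<phi> \<Longrightarrow> sat N V \<rho> (\<sigma>(NL n := S)) \<phi> = sat N V \<rho> \<sigma> \<phi>"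
  by (cases \<phi>) auto

lemma sat_upd_w: "x \<notin> wlabs \<phi> \<Longrightarrow>
   sat N V (\<rho>(x := w)) (\<sigma>(Sing x := {w})) \<phi> = sat N V \<rho> \<sigma> \<phi>"
  by (cases \<phi>) (auto dest: wl_Sing)

lemma real_n: "realization \<rho> \<sigma> \<Longrightarrow> realization \<rho> (\<sigma>(NL n := S))"
  by (simp add: realization_def)

lemma real_w: "realization \<rho> \<sigma> \<Longrightarrow> realization (\<rho>(x := w)) (\<sigma>(Sing x := {w}))"
  by (simp add: realization_def)

definition hold where
  "hold N V \<rho> \<sigma> \<Gamma> \<Delta> \<longleftrightarrow> (\<exists>\<phi> \<in># \<Gamma>. \<not> sat N V \<rho> \<sigma> \<phi>) \<or> (\<exists>\<phi> \<in># \<Delta>. sat N V \<rho> \<sigma> \<phi>)"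

lemma hold_n: "nfresh n \<Gamma> \<Delta> \<Longrightarrow> hold N V \<rho> (\<sigma>(NL n := S)) \<Gamma> \<Delta> = hold N V \<rho> \<sigma> \<Gamma> \<Delta>"
proof -
  assume a: "nfresh n \<Gamma> \<Delta>"
  have "\<forall>\<phi>\<in>#\<Gamma>+\<Delta>. sat N V \<rho> (\<sigma>(NL n := S)) \<phi> = sat N V \<rho> \<sigma> \<phi>"
    using a sat_upd_n unfolding nfresh_def by blast
  then show ?thesis unfolding hold_def by auto
qed

lemma hold_w: "wfresh x \<Gamma> \<Delta> \<Longrightarrow> hold N V (\<rho>(x := w)) (\<sigma>(Sing x := {w})) \<Gamma> \<Delta> = hold N V \<rho> \<sigma> \<Gamma> \<Delta>"
proof -
  assume a: "wfresh x \<Gamma> \<Delta>"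
  have "\<forall>\<phi>\<in>#\<Gamma>+\<Delta>. sat N V (\<rho>(x := w)) (\<sigma>(Sing x := {w})) \<phi> = sat N V \<rho> \<sigma> \<phi>"
  proof
    fix \<phi> assume "\<phi> \<in># \<Gamma>+\<Delta>"
    then have "x \<notin> wlabs \<phi>" using a unfolding wfresh_def by blast
    then show "sat N V (\<rho>(x := w)) (\<sigma>(Sing x := {w})) \<phi> = sat N V \<rho> \<sigma> \<phi>" by (rule sat_upd_w)
  qed
  then show ?thesis unfolding hold_def by auto
qed

lemma valid_hold: "valid N V \<Gamma> \<Delta> \<longleftrightarrow> (\<forall>\<rho> \<sigma>. realization \<rho> \<sigma> \<longrightarrow> hold N V \<rho> \<sigma> \<Gamma> \<Delta>)"
  unfolding valid_def hold_def by simp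

lemma sat_at: "\<rho> y = \<rho> x \<Longrightarrow> sat N V \<rho> \<sigma> (at P y) = sat N V \<rho> \<sigma> (at P x)"
  by (cases P) auto

lemma soundness:
  assumes "derivable b s \<Gamma> \<Delta>" and cl: "in_class b s N" and r: "realization \<rho> \<sigma>"
  shows "hold N V \<rho> \<sigma> \<Gamma> \<Delta>"
  using assms(1) r
proof (induction arbitrary: \<rho> \<sigma> rule: derivable.induct)
  case (allR x \<Gamma> a A \<Delta>)
  show ?case
  proof (rule ccontr)
    assume h: "\<not> ?case"
    then obtain w where w: "w \<in> \<sigma> a" "\<not> forces N V w A" by (auto simp: hold_def)
    have "hold N V (\<rho>(x := w)) (\<sigma>(Sing x := {w})) (add_mset (Mem x a) \<Gamma>) (add_mset (Lab x A) \<Delta>)"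
      by (rule allR.IH[OF real_w[OF allR.prems]])
    moreover have "a \<noteq> Sing x" using allR(1) by (auto simp: wfresh_def dest: wl_Sing)
    ultimately have "hold N V (\<rho>(x := w)) (\<sigma>(Sing x := {w})) \<Gamma> (add_mset (FAll a A) \<Delta>)"
      using w by (auto simp: hold_def)
    then show False using hold_w[OF allR(1), where \<rho>=\<rho> and \<sigma>=\<sigma> and w=w and N=N and V=V] h by simp
  qed
next
  case (exL x a A \<Gamma> \<Delta>)
  show ?case
  proof (rule ccontr)
    assume h: "\<not> ?case"
    then obtain w where w: "w \<in> \<sigma> a" "forces N V w A" by (auto simp: hold_def)
    have "hold N V (\<rho>(x := w)) (\<sigma>(Sing x := {w})) (add_mset (Mem x a) (add_mset (Lab x A) \<Gamma>)) \<Delta>"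
      by (rule exL.IH[OF real_w[OF exL.prems]])
    moreover have "a \<noteq> Sing x" using exL(1) by (auto simp: wfresh_def dest: wl_Sing)
    ultimately have "hold N V (\<rho>(x := w)) (\<sigma>(Sing x := {w})) (add_mset (FEx a A) \<Gamma>) \<Delta>"
      using w by (auto simp: hold_def)
    then show False using hold_w[OF exL(1), where \<rho>=\<rho> and \<sigma>=\<sigma> and w=w and N=N and V=V] h by simp
  qed
next
  case (condR n \<Gamma> x A B \<Delta>)
  show ?case
  proof (rule ccontr)
    assume h: "\<not> ?case"
    then obtain \<alpha> where a: "\<alpha> \<in> N (\<rho> x)" "\<exists>v\<in>\<alpha>. forces N V v A"
      "\<not> (\<exists>\<beta> \<in> N (\<rho> x). \<beta> \<subseteq> \<alpha> \<and> (\<exists>v \<in> \<beta>. forces N V v A) \<and>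
            (\<forall>v \<in> \<beta>. forces N V v A \<longrightarrow> forces N V v B))" by (auto simp: hold_def)
    have "hold N V \<rho> (\<sigma>(NL n := \<alpha>)) (add_mset (InN (NL n) x) (add_mset (FEx (NL n) A) \<Gamma>))
                   (add_mset (CondL x (NL n) A B) \<Delta>)"
      by (rule condR.IH[OF real_n[OF condR.prems]])
    then have "hold N V \<rho> (\<sigma>(NL n := \<alpha>)) \<Gamma> (add_mset (Lab x (Cnd A B)) \<Delta>)"
      using a by (auto simp: hold_def)
    then show False using hold_n[OF condR(1), where \<rho>=\<rho> and \<sigma>=\<sigma> and S=\<alpha> and N=N and V=V] h by simp
  qed
next
  case (barL n x a A B \<Gamma> \<Delta>)
  show ?case
  proof (rule ccontr)
    assume h: "\<not> ?case"
    then obtain \<beta> where a: "\<beta> \<in> N (\<rho> x)" "\<beta> \<subseteq> \<sigma> a" "\<exists>v\<in>\<beta>. forces N V v A"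
      "\<forall>v \<in> \<beta>. forces N V v A \<longrightarrow> forces N V v B" by (auto simp: hold_def)
    have "hold N V \<rho> (\<sigma>(NL n := \<beta>)) (add_mset (InN (NL n) x) (add_mset (Sub (NL n) a)
        (add_mset (FEx (NL n) A) (add_mset (FAll (NL n) (Impl A B)) \<Gamma>)))) \<Delta>"
      by (rule barL.IH[OF real_n[OF barL.prems]])
    moreover have "a \<noteq> NL n" using barL(1) by (auto simp: nfresh_def)
    ultimately have "hold N V \<rho> (\<sigma>(NL n := \<beta>)) (add_mset (CondL x a A B) \<Gamma>) \<Delta>"
      using a by (auto simp: hold_def)
    then show False using hold_n[OF barL(1), where \<rho>=\<rho> and \<sigma>=\<sigma> and S=\<beta> and N=N and V=V] h by simp
  qed
next
  case (ruleN n \<Gamma> \<Delta> x)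
  obtain \<alpha> where a: "\<alpha> \<in> N (\<rho> x)" using cl ruleN(1) by (auto simp: in_class_def normality_def)
  have "hold N V \<rho> (\<sigma>(NL n := \<alpha>)) (add_mset (InN (NL n) x) \<Gamma>) \<Delta>"
    by (rule ruleN.IH[OF real_n[OF ruleN.prems]])
  then have "hold N V \<rho> (\<sigma>(NL n := \<alpha>)) \<Gamma> \<Delta>" using a by (auto simp: hold_def)
  then show ?case using hold_n[OF ruleN(2), where \<rho>=\<rho> and \<sigma>=\<sigma> and S=\<alpha> and N=N and V=V] by simp
next
  case (rule0 y a x \<Gamma> \<Delta>)
  show ?case
  proof (rule ccontr)
    assume h: "\<not> ?case"
    then have "\<sigma> a \<in> N (\<rho> x)" by (auto simp: hold_def)
    moreover have "nbhd_model N" using cl by (simp add: in_class_def)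
    ultimately obtain w where w: "w \<in> \<sigma> a" unfolding nbhd_model_def by blast
    have "hold N V (\<rho>(y := w)) (\<sigma>(Sing y := {w})) (add_mset (Mem y a) (add_mset (InN a x) \<Gamma>)) \<Delta>"
      by (rule rule0.IH[OF real_w[OF rule0.prems]])
    moreover have "a \<noteq> Sing y" using rule0(2) by (auto simp: wfresh_def dest: wl_Sing)
    ultimately have "hold N V (\<rho>(y := w)) (\<sigma>(Sing y := {w})) (add_mset (InN a x) \<Gamma>) \<Delta>"
      using w by (auto simp: hold_def)
    then show False using hold_w[OF rule0(2), where \<rho>=\<rho> and \<sigma>=\<sigma> and w=w and N=N and V=V] h by simp
  qed
next
  case (ruleT n \<Gamma> \<Delta> x)
  obtain \<alpha> where a: "\<alpha> \<in> N (\<rho> x)" "\<rho> x \<in> \<alpha>" using cl ruleT(1)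
    by (auto simp: in_class_def total_reflexivity_def)
  have "hold N V \<rho> (\<sigma>(NL n := \<alpha>)) (add_mset (Mem x (NL n)) (add_mset (InN (NL n) x) \<Gamma>)) \<Delta>"
    by (rule ruleT.IH[OF real_n[OF ruleT.prems]])
  then have "hold N V \<rho> (\<sigma>(NL n := \<alpha>)) \<Gamma> \<Delta>" using a by (auto simp: hold_def)
  then show ?case using hold_n[OF ruleT(2), where \<rho>=\<rho> and \<sigma>=\<sigma> and S=\<alpha> and N=N and V=V] by simp
next
  case (ruleW x a \<Gamma> \<Delta>)
  then show ?case using cl by (auto simp: hold_def in_class_def weak_centering_def)
next
  case (ruleSingle x \<Gamma> \<Delta>)
  then show ?case by (auto simp: hold_def realization_def)
next
  case (ruleC x a \<Gamma> \<Delta>)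
  then show ?case using cl
    by (auto simp: hold_def in_class_def centering_def weak_centering_def realization_def)
next
  case (repl1 y x P \<Gamma> \<Delta>)
  from repl1.IH[OF repl1.prems] show ?case using repl1.prems sat_at[of \<rho> y x]
    by (auto simp: hold_def realization_def)
next
  case (repl2 y x P \<Gamma> \<Delta>)
  from repl2.IH[OF repl2.prems] show ?case using repl2.prems sat_at[of \<rho> y x]
    by (auto simp: hold_def realization_def)
next
  case (ruleU1 n \<Gamma> \<Delta> a x y b' z)
  show ?case
  proof (rule ccontr)
    assume h: "\<not> ?case"
    then have "\<sigma> a \<in> N (\<rho> x)" "\<rho> y \<in> \<sigma> a" "\<sigma> b' \<in> N (\<rho> y)" "\<rho> z \<in> \<sigma> b'"
      using ruleU1 by (auto simp: hold_def)
    moreover have "uniformity N" using cl ruleU1(1) by (simp add: in_class_def)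
    ultimately have "\<rho> z \<in> \<Union>(N (\<rho> x))" unfolding uniformity_def by blast
    then obtain c where c: "c \<in> N (\<rho> x)" "\<rho> z \<in> c" by blast
    have "hold N V \<rho> (\<sigma>(NL n := c)) (add_mset (Mem z (NL n)) (add_mset (InN (NL n) x) \<Gamma>)) \<Delta>"
      by (rule ruleU1.IH[OF real_n[OF ruleU1.prems]])
    then have "hold N V \<rho> (\<sigma>(NL n := c)) \<Gamma> \<Delta>" using c by (auto simp: hold_def)
    then show False using hold_n[OF ruleU1(2), where \<rho>=\<rho> and \<sigma>=\<sigma> and S=c and N=N and V=V] h by simp
  qed
next
  case (ruleU2 n \<Gamma> \<Delta> a x y b' z)
  show ?case
  proof (rule ccontr)
    assume h: "\<not> ?case"
    then have "\<sigma> a \<in> N (\<rho> x)" "\<rho> y \<in> \<sigma> a" "\<sigma> b' \<in> N (\<rho> x)" "\<rho> z \<in> \<sigma> b'"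
      using ruleU2 by (auto simp: hold_def)
    moreover have "uniformity N" using cl ruleU2(1) by (simp add: in_class_def)
    ultimately have "\<rho> z \<in> \<Union>(N (\<rho> y))" unfolding uniformity_def by blast
    then obtain c where c: "c \<in> N (\<rho> y)" "\<rho> z \<in> c" by blast
    have "hold N V \<rho> (\<sigma>(NL n := c)) (add_mset (Mem z (NL n)) (add_mset (InN (NL n) y) \<Gamma>)) \<Delta>"
      by (rule ruleU2.IH[OF real_n[OF ruleU2.prems]])
    then have "hold N V \<rho> (\<sigma>(NL n := c)) \<Gamma> \<Delta>" using c by (auto simp: hold_def)
    then show False using hold_n[OF ruleU2(2), where \<rho>=\<rho> and \<sigma>=\<sigma> and S=c and N=N and V=V] h by simp
  qed
next
  case (ruleA1 a x \<Gamma> y b' \<Delta>)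
  show ?case
  proof (rule ccontr)
    assume h: "\<not> ?case"
    then have "\<sigma> a \<in> N (\<rho> x)" "\<rho> y \<in> \<sigma> a" "\<sigma> b' \<in> N (\<rho> x)"
      using ruleA1 by (auto simp: hold_def)
    then have "\<sigma> b' \<in> N (\<rho> y)" using cl ruleA1(1) by (auto simp: in_class_def absoluteness_def)
    then show False using h ruleA1.IH[OF ruleA1.prems] by (auto simp: hold_def)
  qed
next
  case (ruleA2 a x \<Gamma> y b' \<Delta>)
  show ?case
  proof (rule ccontr)
    assume h: "\<not> ?case"
    then have "\<sigma> a \<in> N (\<rho> x)" "\<rho> y \<in> \<sigma> a" "\<sigma> b' \<in> N (\<rho> y)"
      using ruleA2 by (auto simp: hold_def)
    then have "\<sigma> b' \<in> N (\<rho> x)" using cl ruleA2(1) by (auto simp: in_class_def absoluteness_def)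
    then show False using h ruleA2.IH[OF ruleA2.prems] by (auto simp: hold_def)
  qed
next
  case (barR c x a \<Gamma> A B \<Delta>)
  have h1: "hold N V \<rho> \<sigma> (add_mset (InN c x) (add_mset (Sub c a) \<Gamma>))
            (add_mset (CondL x a A B) (add_mset (FEx c A) \<Delta>))" by (rule barR.IH(1)[OF barR.prems])
  have h2: "hold N V \<rho> \<sigma> (add_mset (InN c x) (add_mset (Sub c a) \<Gamma>))
            (add_mset (CondL x a A B) (add_mset (FAll c (Impl A B)) \<Delta>))" by (rule barR.IH(2)[OF barR.prems])
  show ?case
  proof (rule ccontr)
    assume h: "\<not> ?case"
    then have G: "\<forall>\<phi>\<in>#\<Gamma>. sat N V \<rho> \<sigma> \<phi>" and D: "\<forall>\<phi>\<in>#\<Delta>. \<not> sat N V \<rho> \<sigma> \<phi>"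
      and c1: "sat N V \<rho> \<sigma> (InN c x)" and c2: "sat N V \<rho> \<sigma> (Sub c a)"
      and ncl: "\<not> sat N V \<rho> \<sigma> (CondL x a A B)" unfolding hold_def by (simp_all del: sat.simps)
    have "sat N V \<rho> \<sigma> (FEx c A)" using h1 G D c1 c2 ncl unfolding hold_def by (auto simp del: sat.simps)
    moreover have "sat N V \<rho> \<sigma> (FAll c (Impl A B))" using h2 G D c1 c2 ncl unfolding hold_def by (auto simp del: sat.simps)
    ultimately have "sat N V \<rho> \<sigma> (CondL x a A B)" using c1 c2 by (simp only: sat.simps) blast
    then show False using ncl by simp
  qed
next
  case (condL a x A B \<Gamma> \<Delta>)
  have h1: "hold N V \<rho> \<sigma> (add_mset (InN a x) (add_mset (Lab x (Cnd A B)) \<Gamma>)) (add_mset (FEx a A) \<Delta>)"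
    by (rule condL.IH(1)[OF condL.prems])
  have h2: "hold N V \<rho> \<sigma> (add_mset (CondL x a A B) (add_mset (InN a x) (add_mset (Lab x (Cnd A B)) \<Gamma>))) \<Delta>"
    by (rule condL.IH(2)[OF condL.prems])
  show ?case
  proof (rule ccontr)
    assume h: "\<not> ?case"
    then have G: "\<forall>\<phi>\<in>#\<Gamma>. sat N V \<rho> \<sigma> \<phi>" and D: "\<forall>\<phi>\<in>#\<Delta>. \<not> sat N V \<rho> \<sigma> \<phi>"
      and c1: "sat N V \<rho> \<sigma> (InN a x)" and c2: "sat N V \<rho> \<sigma> (Lab x (Cnd A B))"
      unfolding hold_def by (simp_all del: sat.simps)
    have "sat N V \<rho> \<sigma> (FEx a A)" using h1 G D c1 c2 unfolding hold_def by (auto simp del: sat.simps)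
    then have "sat N V \<rho> \<sigma> (CondL x a A B)" using c1 c2 by (simp only: sat.simps forces.simps)
    then show False using h2 G D c1 c2 unfolding hold_def by (auto simp del: sat.simps)
  qed
next
  case conjL
  from conjL.IH[OF conjL.prems] show ?case by (auto simp: hold_def)
next
  case conjR
  from conjR.IH[OF conjR.prems] show ?case by (auto simp: hold_def)
next
  case disjL
  from disjL.IH[OF disjL.prems] show ?case by (auto simp: hold_def)
next
  case disjR
  from disjR.IH[OF disjR.prems] show ?case by (auto simp: hold_def)
next
  case implL
  from implL.IH[OF implL.prems] show ?case by (auto simp: hold_def)
next
  case implR
  from implR.IH[OF implR.prems] show ?case by (auto simp: hold_def)
next
  case allL
  from allL.IH[OF allL.prems] show ?case by (auto simp: hold_def)
next
  case exR
  from exR.IH[OF exR.prems] show ?case by (auto simp: hold_def)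
next
  case refl
  from refl.IH[OF refl.prems] show ?case by (auto simp: hold_def)
next
  case trans
  from trans.IH[OF trans.prems] show ?case by (auto simp: hold_def)
next
  case subL
  from subL.IH[OF subL.prems] show ?case by (auto simp: hold_def)
next
  case init
  then show ?case by (auto simp: hold_def)
next
  case botL
  then show ?case by (auto simp: hold_def)
qed

theorem mainTheorem9:
  fixes b :: base and s :: sfx
    and N :: "'w \<Rightarrow> 'w set set" and V :: "nat \<Rightarrow> 'w set"
    and \<Gamma> \<Delta> :: "lf multiset"
  assumes "derivable b s \<Gamma> \<Delta>"
    and "in_class b s N"
  shows "valid N V \<Gamma> \<Delta>"
  using soundness[OF assms] valid_hold by blast

end
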